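(* Let $H$ be a Hilbert space, let $A$ be a unitary operator on $H$ and let $B$ be a densely defined (possibly unbounded) normal operator in $H$. Then $BA$ is normal if and only if $AB$ is normal.
   Context: For (possibly unbounded) operators $S,T$, the product $ST$ has domain $D(ST)=\{x\in D(T): Tx\in D(S)\}$. A densely defined operator $T$ is normal if it is closed and $TT^*=T^*T$ (equality including domains). *)

theory Defs
  imports "HOL-Analysis.Analysis"
begin

class complex_vector = real_vector +
  fixes scaleC :: "complex \<Rightarrow> 'a \<Rightarrow> 'a"
  assumes scaleC_add_right: "scaleC a (x + y) = scaleC a x + scaleC a y"
    and scaleC_add_left: "scaleC (a + b) x = scaleC a x + scaleC b x"
    and scaleC_scaleC: "scaleC a (scaleC b x) = scaleC (a * b) x"
    and scaleC_one: "scaleC 1 x = x"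
    and scaleR_scaleC: "scaleR r x = scaleC (complex_of_real r) x"

class complex_inner = complex_vector + real_normed_vector +
  fixes cinner :: "'a \<Rightarrow> 'a \<Rightarrow> complex"
  assumes cinner_commute: "cinner x y = cnj (cinner y x)"
    and cinner_add_left: "cinner (x + y) z = cinner x z + cinner y z"
    and cinner_scaleC_left: "cinner (scaleC r x) y = cnj r * cinner x y"
    and cinner_nonneg: "Im (cinner x x) = 0 \<and> Re (cinner x x) \<ge> 0"
    and cinner_eq_zero_iff: "cinner x x = 0 \<longleftrightarrow> x = 0"
    and norm_eq_sqrt_cinner: "norm x = sqrt (Re (cinner x x))"

class chilbert_space = complex_inner + complete_space

text \<open>An operator T in H is identified with its graph, a subset of H x H.
  Its domain is Domain T; (x,y) in T means x in D(T) and Tx = y.\<close>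

definition is_operator :: "('a::complex_vector \<times> 'a) set \<Rightarrow> bool" where
  "is_operator T \<longleftrightarrow>
     (0, 0) \<in> T \<and>
     (\<forall>x y u v. (x, y) \<in> T \<longrightarrow> (u, v) \<in> T \<longrightarrow> (x + u, y + v) \<in> T) \<and>
     (\<forall>c x y. (x, y) \<in> T \<longrightarrow> (scaleC c x, scaleC c y) \<in> T) \<and>
     (\<forall>x y z. (x, y) \<in> T \<longrightarrow> (x, z) \<in> T \<longrightarrow> y = z)"

definition densely_defined :: "('a::complex_inner \<times> 'a) set \<Rightarrow> bool" where
  "densely_defined T \<longleftrightarrow> closure (Domain T) = UNIV"

definition closed_op :: "('a::complex_inner \<times> 'a) set \<Rightarrow> bool" where
  "closed_op T \<longleftrightarrow> closed T"

definition adjoint :: "('a::complex_inner \<times> 'a) set \<Rightarrow> ('a \<times> 'a) set" where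
  "adjoint T = {(y, z). \<forall>x w. (x, w) \<in> T \<longrightarrow> cinner w y = cinner x z}"

text \<open>Product ST with D(ST) = {x in D(T). Tx in D(S)}: relational composition of graphs.\<close>
definition op_mult :: "('a \<times> 'a) set \<Rightarrow> ('a \<times> 'a) set \<Rightarrow> ('a \<times> 'a) set" where
  "op_mult S T = T O S"

definition normal_op :: "('a::complex_inner \<times> 'a) set \<Rightarrow> bool" where
  "normal_op T \<longleftrightarrow> is_operator T \<and> densely_defined T \<and> closed_op T \<and>
     op_mult T (adjoint T) = op_mult (adjoint T) T"

definition unitary_op :: "('a::complex_inner \<times> 'a) set \<Rightarrow> bool" where
  "unitary_op A \<longleftrightarrow> is_operator A \<and> Domain A = UNIV \<and>
     (\<exists>K. \<forall>x y. (x, y) \<in> A \<longrightarrow> norm y \<le> K * norm x) \<and>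
     op_mult (adjoint A) A = Id \<and> op_mult A (adjoint A) = Id"

end

theory Submission
  imports Defs
begin

definition unit_fun :: "('a::complex_inner \<Rightarrow> 'a) \<Rightarrow> bool" where
  "unit_fun u \<longleftrightarrow> (\<forall>x y. u (x + y) = u x + u y) \<and> (\<forall>c x. u (scaleC c x) = scaleC c (u x))
     \<and> (\<forall>x y. cinner (u x) (u y) = cinner x y) \<and> bij u"

definition conj_op :: "('a \<Rightarrow> 'a) \<Rightarrow> ('a \<times> 'a) set \<Rightarrow> ('a \<times> 'a) set" where
  "conj_op u T = (\<lambda>(x,y). (u x, u y)) ` T"

lemma unit_fun_inv:
  assumes "unit_fun u" shows "unit_fun (inv u)"
proof -
  have b: "bij u" and a: "\<And>x y. u (x + y) = u x + u y"
    and s: "\<And>c x. u (scaleC c x) = scaleC c (u x)"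
    and i: "\<And>x y. cinner (u x) (u y) = cinner x y" using assms unfolding unit_fun_def by auto
  have ui: "\<And>x. u (inv u x) = x" by (meson b bij_is_surj surj_f_inv_f)
  have iu: "\<And>x. inv u (u x) = x" by (meson b bij_is_inj inv_f_f)
  have "inv u (x + y) = inv u x + inv u y" for x y
    by (metis a iu ui)
  moreover have "inv u (scaleC c x) = scaleC c (inv u x)" for c x
    by (metis s iu ui)
  moreover have "cinner (inv u x) (inv u y) = cinner x y" for x y
    by (metis i ui)
  moreover have "bij (inv u)" using b by (simp add: bij_imp_bij_inv)
  ultimately show ?thesis unfolding unit_fun_def by blast
qed

lemma unit_fun_cont:
  assumes "unit_fun u" shows "continuous_on S u"
proof -
  have a: "\<And>x y. u (x + y) = u x + u y"
    and s: "\<And>c x. u (scaleC c x) = scaleC c (u x)"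
    and i: "\<And>x y. cinner (u x) (u y) = cinner x y" using assms unfolding unit_fun_def by auto
  have "bounded_linear u"
  proof (rule bounded_linear_intro[where K=1])
    show "u (x + y) = u x + u y" for x y by (rule a)
    show "u (scaleR r x) = scaleR r (u x)" for r x by (simp add: scaleR_scaleC s)
    show "norm (u x) \<le> norm x * 1" for x by (simp add: norm_eq_sqrt_cinner i)
  qed
  then show ?thesis by (simp add: linear_continuous_on)
qed

lemma conj_op_mem:
  assumes "unit_fun u" shows "(a, b) \<in> conj_op u T \<longleftrightarrow> (inv u a, inv u b) \<in> T"
proof -
  have b: "bij u" using assms unfolding unit_fun_def by auto
  have ui: "\<And>x. u (inv u x) = x" by (meson b bij_is_surj surj_f_inv_f)
  have iu: "\<And>x. inv u (u x) = x" by (meson b bij_is_inj inv_f_f)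
  show ?thesis unfolding conj_op_def
    by (force simp: ui iu intro: image_eqI[where x="(inv u a, inv u b)"])
qed

lemma conj_op_vimage:
  assumes "unit_fun u" shows "conj_op u T = (\<lambda>p. (inv u (fst p), inv u (snd p))) -` T"
  using conj_op_mem[OF assms] by auto

lemma conj_op_mult:
  assumes "unit_fun u" shows "op_mult (conj_op u S) (conj_op u T) = conj_op u (op_mult S T)"
proof -
  have b: "bij u" using assms unfolding unit_fun_def by auto
  have ui: "\<And>x. u (inv u x) = x" by (meson b bij_is_surj surj_f_inv_f)
  have "(a, c) \<in> op_mult (conj_op u S) (conj_op u T) \<longleftrightarrow> (a, c) \<in> conj_op u (op_mult S T)" for a c
  proof -
    have "(a, c) \<in> op_mult (conj_op u S) (conj_op u T) \<longleftrightarrow>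
       (\<exists>b. (inv u a, inv u b) \<in> T \<and> (inv u b, inv u c) \<in> S)"
      by (simp add: op_mult_def relcomp_unfold conj_op_mem[OF assms])
    also have "\<dots> \<longleftrightarrow> (\<exists>b. (inv u a, b) \<in> T \<and> (b, inv u c) \<in> S)"
      by (metis b bij_is_inj inv_f_f)
    also have "\<dots> \<longleftrightarrow> (a, c) \<in> conj_op u (op_mult S T)"
      by (simp add: op_mult_def relcomp_unfold conj_op_mem[OF assms])
    finally show ?thesis .
  qed
  then show ?thesis by auto
qed

lemma conj_op_adj:
  assumes "unit_fun u" shows "adjoint (conj_op u T) = conj_op u (adjoint T)"
proof -
  have b: "bij u" and i: "\<And>x y. cinner (u x) (u y) = cinner x y"
    using assms unfolding unit_fun_def by auto
  have ui: "\<And>x. u (inv u x) = x" by (meson b bij_is_surj surj_f_inv_f)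
  have "(y, z) \<in> adjoint (conj_op u T) \<longleftrightarrow> (y, z) \<in> conj_op u (adjoint T)" for y z
  proof -
    have "(y, z) \<in> adjoint (conj_op u T) \<longleftrightarrow>
      (\<forall>x w. (x, w) \<in> T \<longrightarrow> cinner (u w) y = cinner (u x) z)"
      unfolding adjoint_def conj_op_def by (auto; force)
    also have "\<dots> \<longleftrightarrow> (\<forall>x w. (x, w) \<in> T \<longrightarrow> cinner w (inv u y) = cinner x (inv u z))"
      by (metis i ui)
    also have "\<dots> \<longleftrightarrow> (y, z) \<in> conj_op u (adjoint T)"
      unfolding conj_op_mem[OF assms] adjoint_def by auto
    finally show ?thesis .
  qed
  then show ?thesis by auto
qed

lemma conj_normal:
  assumes u: "unit_fun u" and T: "normal_op T" shows "normal_op (conj_op u T)"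
proof -
  define v where "v = inv u"
  have uv: "unit_fun v" unfolding v_def by (rule unit_fun_inv[OF u])
  have va: "\<And>x y. v (x + y) = v x + v y" and vs: "\<And>c x. v (scaleC c x) = scaleC c (v x)"
    and vb: "bij v" using uv unfolding unit_fun_def by auto
  have v0: "v 0 = 0" using va[of 0 0] by simp
  have mem: "\<And>a b. (a, b) \<in> conj_op u T \<longleftrightarrow> (v a, v b) \<in> T"
    using conj_op_mem[OF u] unfolding v_def by blast
  have opT: "is_operator T" and dT: "densely_defined T" and cT: "closed_op T"
    and nT: "op_mult T (adjoint T) = op_mult (adjoint T) T" using T unfolding normal_op_def by auto
  have op: "is_operator (conj_op u T)"
    unfolding is_operator_def mem
  proof (intro conjI allI impI)
    show "(v 0, v 0) \<in> T" using opT v0 unfolding is_operator_def by simp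
    show "(v (x + u'), v (y + w)) \<in> T" if "(v x, v y) \<in> T" "(v u', v w) \<in> T" for x y u' w
      using opT that unfolding is_operator_def va by blast
    show "(v (scaleC c x), v (scaleC c y)) \<in> T" if "(v x, v y) \<in> T" for c x y
      using opT that unfolding is_operator_def vs by blast
    show "y = z" if "(v x, v y) \<in> T" "(v x, v z) \<in> T" for x y z
    proof -
      have "v y = v z" using opT that unfolding is_operator_def by blast
      then show ?thesis using vb bij_is_inj injD by metis
    qed
  qed
  have ucont: "continuous_on S u" for S by (rule unit_fun_cont[OF u])
  have dense: "densely_defined (conj_op u T)"
  proof -
    have sub: "u ` Domain T \<subseteq> Domain (conj_op u T)"
      unfolding conj_op_def by force
    have "u ` closure (Domain T) \<subseteq> closure (Domain (conj_op u T))"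
      by (rule image_closure_subset[OF ucont closed_closure]) (use sub closure_subset in blast)
    moreover have "u ` closure (Domain T) = UNIV"
      using dT u unfolding densely_defined_def unit_fun_def by (simp add: bij_is_surj)
    ultimately show ?thesis unfolding densely_defined_def by blast
  qed
  have vcont: "continuous_on UNIV v" by (rule unit_fun_cont[OF uv])
  have pc: "continuous_on UNIV (\<lambda>p. (v (fst p), v (snd p)))"
  proof (rule continuous_on_Pair)
    show "continuous_on UNIV (\<lambda>p. v (fst p))"
      by (rule continuous_on_compose2[OF vcont continuous_on_fst[OF continuous_on_id]]) auto
    show "continuous_on UNIV (\<lambda>p. v (snd p))"
      by (rule continuous_on_compose2[OF vcont continuous_on_snd[OF continuous_on_id]]) auto
  qed
  have cl: "closed_op (conj_op u T)"
    unfolding closed_op_def conj_op_vimage[OF u] v_def[symmetric]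
    using closed_vimage[OF cT[unfolded closed_op_def] pc] by simp
  have "op_mult (conj_op u T) (adjoint (conj_op u T)) = op_mult (adjoint (conj_op u T)) (conj_op u T)"
    unfolding conj_op_adj[OF u] conj_op_mult[OF u] nT ..
  then show ?thesis using op dense cl unfolding normal_op_def by blast
qed

lemma unitary_fun:
  fixes A :: "('a::complex_inner \<times> 'a) set"
  assumes "unitary_op A"
  obtains u where "unit_fun u" "\<And>x y. (x, y) \<in> A \<longleftrightarrow> y = u x"
proof -
  have opA: "is_operator A" and dA: "Domain A = UNIV"
    and i1: "op_mult (adjoint A) A = Id" and i2: "op_mult A (adjoint A) = Id"
    using assms unfolding unitary_op_def by auto
  define u where "u x = (THE y. (x, y) \<in> A)" for x
  have sv: "\<And>x y z. (x, y) \<in> A \<Longrightarrow> (x, z) \<in> A \<Longrightarrow> y = z"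
    using opA unfolding is_operator_def by blast
  have Au: "(x, y) \<in> A \<longleftrightarrow> y = u x" for x y
  proof -
    have "x \<in> Domain A" using dA by simp
    then obtain y0 where y0: "(x, y0) \<in> A" by blast
    have "u x = y0" unfolding u_def
      by (rule the_equality) (use y0 sv in \<open>blast+\<close>)
    then show ?thesis using y0 sv by blast
  qed
  have add: "u (x + y) = u x + u y" for x y
  proof -
    have "(x, u x) \<in> A" "(y, u y) \<in> A" using Au by auto
    then have "(x + y, u x + u y) \<in> A" using opA unfolding is_operator_def by blast
    then show ?thesis using Au by simp
  qed
  have sc: "u (scaleC c x) = scaleC c (u x)" for c x
  proof -
    have "(x, u x) \<in> A" using Au by auto
    then have "(scaleC c x, scaleC c (u x)) \<in> A" using opA unfolding is_operator_def by blast
    then show ?thesis using Au by simp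
  qed
  have inn: "cinner (u p) (u x) = cinner p x" for p x
  proof -
    have "(x, x) \<in> A O adjoint A" using i1 unfolding op_mult_def by simp
    then obtain y where "(x, y) \<in> A" "(y, x) \<in> adjoint A" by blast
    then show ?thesis using Au unfolding adjoint_def by auto
  qed
  have sur: "surj u"
  proof -
    have "y \<in> range u" for y
    proof -
      have "(y, y) \<in> adjoint A O A" using i2 unfolding op_mult_def by simp
      then obtain z where "(z, y) \<in> A" by blast
      then show ?thesis using Au by auto
    qed
    then show ?thesis by auto
  qed
  have inj: "inj u"
  proof (rule injI)
    fix x y assume "u x = u y"
    have uz: "u (x - y) + u y = u x" using add[of "x - y" y] by simp
    then have "u (x - y) = 0" using \<open>u x = u y\<close> by simp
    then have "cinner (x - y) (x - y) = 0" using inn[of "x - y" "x - y"]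
      by (metis cinner_eq_zero_iff)
    then have "x - y = 0" using cinner_eq_zero_iff by blast
    then show "x = y" by simp
  qed
  have "unit_fun u" unfolding unit_fun_def using add sc inn sur inj bij_def by blast
  then show ?thesis using that Au by blast
qed

theorem mainTheorem3:
  fixes A B :: "('a::chilbert_space \<times> 'a) set"
  assumes "unitary_op A"
    and "is_operator B" and "densely_defined B" and "normal_op B"
  shows "normal_op (op_mult B A) \<longleftrightarrow> normal_op (op_mult A B)"
proof -
  obtain u where u: "unit_fun u" and Au: "\<And>x y. (x, y) \<in> A \<longleftrightarrow> y = u x"
    using unitary_fun[OF assms(1)] by blast
  have b: "bij u" using u unfolding unit_fun_def by auto
  have ui: "\<And>x. u (inv u x) = x" by (meson b bij_is_surj surj_f_inv_f)
  have iu: "\<And>x. inv u (u x) = x" by (meson b bij_is_inj inv_f_f)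
  have inj: "\<And>x y. u x = u y \<Longrightarrow> x = y" by (metis iu)
  have e1: "op_mult A B = conj_op u (op_mult B A)"
  proof -
    have "(a, c) \<in> op_mult A B \<longleftrightarrow> (a, c) \<in> conj_op u (op_mult B A)" for a c
    proof -
      have "(a, c) \<in> op_mult A B \<longleftrightarrow> (\<exists>y. (a, y) \<in> B \<and> (y, c) \<in> A)"
        unfolding op_mult_def by blast
      also have "\<dots> \<longleftrightarrow> (a, inv u c) \<in> B"
        using Au ui iu by metis
      also have "\<dots> \<longleftrightarrow> (\<exists>y. (inv u a, y) \<in> A \<and> (y, inv u c) \<in> B)"
        using Au ui by metis
      also have "\<dots> \<longleftrightarrow> (a, c) \<in> conj_op u (op_mult B A)"
        unfolding conj_op_mem[OF u] op_mult_def by blast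
      finally show ?thesis .
    qed
    then show ?thesis by auto
  qed
  have e2: "op_mult B A = conj_op (inv u) (op_mult A B)"
  proof -
    have iiu: "inv (inv u) = u" using b by (simp add: inv_inv_eq)
    have "(a, c) \<in> op_mult B A \<longleftrightarrow> (a, c) \<in> conj_op (inv u) (op_mult A B)" for a c
    proof -
      have "(a, c) \<in> op_mult B A \<longleftrightarrow> (\<exists>y. (a, y) \<in> A \<and> (y, c) \<in> B)"
        unfolding op_mult_def by blast
      also have "\<dots> \<longleftrightarrow> (u a, c) \<in> B"
        using Au by metis
      also have "\<dots> \<longleftrightarrow> (\<exists>y. (u a, y) \<in> B \<and> (y, u c) \<in> A)"
        using Au inj by metis
      also have "\<dots> \<longleftrightarrow> (a, c) \<in> conj_op (inv u) (op_mult A B)"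
        unfolding conj_op_mem[OF unit_fun_inv[OF u]] iiu op_mult_def by blast
      finally show ?thesis .
    qed
    then show ?thesis by auto
  qed
  show ?thesis
  proof
    assume h: "normal_op (op_mult B A)"
    show "normal_op (op_mult A B)" by (subst e1) (rule conj_normal[OF u h])
  next
    assume h: "normal_op (op_mult A B)"
    show "normal_op (op_mult B A)" by (subst e2) (rule conj_normal[OF unit_fun_inv[OF u] h])
  qed
qed

end
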